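(* The discriminant $\Delta(a_0,\ldots,a_4)$ lies in $\mathbb{Q}[a_0,\ldots,a_4]$; it is a symmetric polynomial, homogeneous of degree $32$, and absolutely irreducible.
   Context: For indeterminates $a_0,\ldots,a_4$ define $$\Delta(a_0,\ldots,a_4):=\prod_{i_1,i_2,i_3,i_4\in\{0,1\}}\Big(\sqrt{a_1a_2a_3a_4}+(-1)^{i_1}\sqrt{a_0a_2a_3a_4}+(-1)^{i_2}\sqrt{a_0a_1a_3a_4}+(-1)^{i_3}\sqrt{a_0a_1a_2a_4}+(-1)^{i_4}\sqrt{a_0a_1a_2a_3}\Big),$$ a priori an element of $\mathbb{Q}[\sqrt{a_0},\ldots,\sqrt{a_4}]$; equivalently $\Delta=a_0^8\cdots a_4^8\prod_{i_1,\ldots,i_4\in\{0,1\}}\big(\tfrac{1}{\sqrt{a_0}}+(-1)^{i_1}\tfrac{1}{\sqrt{a_1}}+\cdots+(-1)^{i_4}\tfrac{1}{\sqrt{a_4}}\big)$. It is called the discriminant of the cubic surface $S^{(a_0,\ldots,a_4)}\subset\mathbf{P}^4$ given by $a_0X_0^3+\cdots+a_4X_4^3=0$, $X_0+\cdots+X_4=0$ (pentahedral normal form). *)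

theory Defs
  imports Complex_Main "HOL-Computational_Algebra.Polynomial" "HOL-Combinatorics.Permutations"
begin

text \<open>Polynomials in the five indeterminates a_0,...,a_4 over a ring R are modelled by the
  iterated univariate polynomial ring R[a_0][a_1][a_2][a_3][a_4], i.e. the type
  R poly poly poly poly poly (innermost variable a_0, outermost variable a_4).\<close>

type_synonym 'a mpoly5 = "'a poly poly poly poly poly"

definition coeff5 :: "'a::zero mpoly5 \<Rightarrow> (nat \<Rightarrow> nat) \<Rightarrow> 'a" where
  "coeff5 p k = coeff (coeff (coeff (coeff (coeff p (k 4)) (k 3)) (k 2)) (k 1)) (k 0)"

definition eval5 :: "'a::comm_semiring_1 mpoly5 \<Rightarrow> (nat \<Rightarrow> 'a) \<Rightarrow> 'a" where
  "eval5 p x = poly (poly (poly (poly (poly p [:[:[:[:x 4:]:]:]:]) [:[:[:x 3:]:]:]) [:[:x 2:]:]) [:x 1:]) (x 0)"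

definition map5 :: "('a::zero \<Rightarrow> 'b::zero) \<Rightarrow> 'a mpoly5 \<Rightarrow> 'b mpoly5" where
  "map5 f p = map_poly (map_poly (map_poly (map_poly (map_poly f))) ) p"

text \<open>The defining product of the discriminant, evaluated at square roots s_i of a_i:
  the summand m j is the product of all s_i with i different from j, i.e. sqrt of
  the product of the a_i with i different from j.\<close>
definition Delta_sqrt :: "(nat \<Rightarrow> complex) \<Rightarrow> complex" where
  "Delta_sqrt s =
    (let m = (\<lambda>j. \<Prod>i\<in>{0..4::nat} - {j}. s i) in
     \<Prod>i1\<in>{0..1::nat}. \<Prod>i2\<in>{0..1::nat}. \<Prod>i3\<in>{0..1::nat}. \<Prod>i4\<in>{0..1::nat}.
       m 0 + (-1)^i1 * m 1 + (-1)^i2 * m 2 + (-1)^i3 * m 3 + (-1)^i4 * m 4)"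

end

theory Submission
  imports Defs "HOL-Computational_Algebra.Polynomial_Factorial" "HOL-Computational_Algebra.Field_as_Ring"
    "HOL-Number_Theory.Cong"
begin

definition rh :: "('a::comm_ring_1 \<Rightarrow> 'b::comm_ring_1) \<Rightarrow> bool" where
  "rh f \<longleftrightarrow> f 0 = 0 \<and> f 1 = 1 \<and> (\<forall>a b. f (a+b) = f a + f b) \<and> (\<forall>a b. f (a*b) = f a * f b)"

lemma rhD:
  assumes "rh f"
  shows "f 0 = 0" "f 1 = 1" "f (a+b) = f a + f b" "f (a*b) = f a * f b"
  using assms unfolding rh_def by auto

lemma rh_minus: "rh f \<Longrightarrow> f (- a) = - f a"
proof -
  assume h: "rh f"
  have "f a + f (-a) = 0" using rhD(3)[OF h, of a "-a"] by (simp add: rhD(1)[OF h])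
  then show ?thesis by (simp add: eq_neg_iff_add_eq_0 add.commute)
qed

lemma rh_diff: "rh f \<Longrightarrow> f (a - b) = f a - f b"
  using rhD(3)[of f a "-b"] rh_minus[of f b] by simp

lemma rh_sum: "rh f \<Longrightarrow> f (sum g A) = (\<Sum>a\<in>A. f (g a))"
  by (induction A rule: infinite_finite_induct) (auto simp: rhD)

lemma rh_prod: "rh f \<Longrightarrow> f (prod g A) = (\<Prod>a\<in>A. f (g a))"
  by (induction A rule: infinite_finite_induct) (auto simp: rhD)

lemma rh_power: "rh f \<Longrightarrow> f (a ^ n) = f a ^ n"
  by (induction n) (auto simp: rhD)

lemma rh_of_nat: "rh f \<Longrightarrow> f (of_nat n) = of_nat n"
  by (induction n) (auto simp: rhD)

lemma rh_numeral: "rh f \<Longrightarrow> f (numeral n) = numeral n"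
  using rh_of_nat[of f "numeral n"] by simp

lemmas rh_simps = rhD rh_minus rh_diff rh_sum rh_prod rh_power rh_of_nat rh_numeral

lemma rh_map_poly: assumes h: "rh f" shows "rh (map_poly f)"
proof -
  have f0: "f 0 = 0" using rhD[OF h] by simp
  show ?thesis unfolding rh_def
  proof (intro conjI allI)
    show "map_poly f 0 = 0" by simp
    show "map_poly f 1 = 1" using rhD(2)[OF h] by simp
    fix a b :: "'a poly"
    show "map_poly f (a + b) = map_poly f a + map_poly f b"
      by (rule poly_eqI) (simp add: coeff_map_poly f0 rhD(3)[OF h])
    show "map_poly f (a * b) = map_poly f a * map_poly f b"
      by (rule poly_eqI) (simp add: coeff_map_poly f0 coeff_mult rh_sum[OF h] rhD(4)[OF h])
  qed
qed

lemma rh_poly_eval: "rh (\<lambda>p. poly p y)"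
  unfolding rh_def by (simp add: poly_mult)

lemma rh_comp: "rh f \<Longrightarrow> rh g \<Longrightarrow> rh (\<lambda>x. f (g x))"
  unfolding rh_def by auto

lemma rh_id: "rh (\<lambda>x. x)" unfolding rh_def by auto

lemma poly_hom: assumes h: "rh h" shows "poly (map_poly h p) (h y) = h (poly p y)"
proof (induction p)
  case (pCons a p)
  then show ?case using rhD[OF h] by (simp add: map_poly_pCons)
qed (simp add: rhD[OF h])

lemma rh_map5: "rh f \<Longrightarrow> rh (map5 f)"
  unfolding map5_def[abs_def] by (intro rh_map_poly)

lemma rh_eval5: "rh (\<lambda>p. eval5 p x)"
  unfolding eval5_def
  by (intro rh_comp[OF rh_poly_eval] rh_poly_eval)

lemma eval5_hom: assumes h: "rh h"
  shows "eval5 (map5 h p) (\<lambda>i. h (x i)) = h (eval5 p x)"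
proof -
  have h1: "rh (map_poly h)" by (rule rh_map_poly[OF h])
  have h2: "rh (map_poly (map_poly h))" by (rule rh_map_poly[OF h1])
  have h3: "rh (map_poly (map_poly (map_poly h)))" by (rule rh_map_poly[OF h2])
  have h4: "rh (map_poly (map_poly (map_poly (map_poly h))))" by (rule rh_map_poly[OF h3])
  have z: "h 0 = 0" "map_poly h 0 = 0" "map_poly (map_poly h) 0 = 0" "map_poly (map_poly (map_poly h)) 0 = 0"
    by (simp_all add: rhD[OF h])
  show ?thesis
    unfolding eval5_def map5_def
    by (simp add: poly_hom[OF h, symmetric] poly_hom[OF h1, symmetric] poly_hom[OF h2, symmetric]
        poly_hom[OF h3, symmetric] poly_hom[OF h4, symmetric] map_poly_pCons z)
qed

lemmas eval5_simps[simp] = rh_simps[OF rh_eval5]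

definition Cn :: "'a::comm_ring_1 \<Rightarrow> 'a mpoly5" where "Cn c = [:[:[:[:[:c:]:]:]:]:]"

lemma eval5_Cn[simp]: "eval5 (Cn c) x = c"
  by (simp add: eval5_def Cn_def)

lemma rh_Cn: "rh (Cn :: 'a::comm_ring_1 \<Rightarrow> _)"
  unfolding rh_def Cn_def by (simp add: pCons_one)

definition monoc :: "'a::comm_ring_1 \<Rightarrow> (nat \<Rightarrow> nat) \<Rightarrow> 'a mpoly5" where
  "monoc c k = monom (monom (monom (monom (monom c (k 0)) (k 1)) (k 2)) (k 3)) (k 4)"

definition xmon :: "(nat \<Rightarrow> nat) \<Rightarrow> (nat \<Rightarrow> 'a::comm_ring_1) \<Rightarrow> 'a" where
  "xmon k x = x 0 ^ k 0 * x 1 ^ k 1 * x 2 ^ k 2 * x 3 ^ k 3 * x 4 ^ k 4"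

lemma eval5_monoc[simp]: "eval5 (monoc c k) x = c * xmon k x"
  by (simp add: eval5_def monoc_def xmon_def poly_monom poly_power mult_ac)

lemma coeff5_monoc: "coeff5 (monoc c k) j = (if j 0 = k 0 \<and> j 1 = k 1 \<and> j 2 = k 2 \<and> j 3 = k 3 \<and> j 4 = k 4 then c else 0)"
  by (auto simp add: coeff5_def monoc_def)

lemma coeff5_add[simp]: "coeff5 (p + q) k = coeff5 p k + coeff5 q k"
  by (simp add: coeff5_def)
lemma coeff5_0[simp]: "coeff5 0 k = 0"
  by (simp add: coeff5_def)
lemma coeff5_sum: "coeff5 (sum f A) k = (\<Sum>a\<in>A. coeff5 (f a) k)"
  by (induction A rule: infinite_finite_induct) auto

lemma coeff5_ext:
  assumes "\<And>k. coeff5 p k = coeff5 q k" shows "p = q"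
proof -
  have "\<And>n0 n1 n2 n3 n4. coeff (coeff (coeff (coeff (coeff p n4) n3) n2) n1) n0 =
      coeff (coeff (coeff (coeff (coeff q n4) n3) n2) n1) n0"
    subgoal for n0 n1 n2 n3 n4
      using assms[of "\<lambda>i. if i = 0 then n0 else if i = 1 then n1 else if i = 2 then n2 else if i = 3 then n3 else n4"]
      by (simp add: coeff5_def)
    done
  then show ?thesis by (intro poly_eqI) blast
qed

definition restr :: "(nat \<Rightarrow> nat) \<Rightarrow> nat \<Rightarrow> nat" where "restr k = (\<lambda>i. if i < 5 then k i else 0)"

lemma coeff5_restr[simp]: "coeff5 p (restr k) = coeff5 p k"
  by (simp add: coeff5_def restr_def)

definition supp5 :: "'a::zero mpoly5 \<Rightarrow> (nat \<Rightarrow> nat) set" where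
  "supp5 p = {k. coeff5 p k \<noteq> 0 \<and> (\<forall>i\<ge>5. k i = 0)}"

definition tup :: "nat \<times> nat \<times> nat \<times> nat \<times> nat \<Rightarrow> nat \<Rightarrow> nat" where
  "tup = (\<lambda>(n4,n3,n2,n1,n0) i. if i = 0 then n0 else if i = 1 then n1 else if i = 2 then n2 else if i = 3 then n3 else if i = 4 then n4 else 0)"

lemma finite_coeff_nz: "finite {n. coeff q n \<noteq> 0}"
  by (rule finite_subset[of _ "{..degree q}"]) (auto intro: le_degree)

lemma finite_supp5: "finite (supp5 p)"
proof -
  let ?S = "\<lambda>q. {n. coeff q n \<noteq> 0}"
  let ?T = "SIGMA n4:?S p. SIGMA n3:?S (coeff p n4). SIGMA n2:?S (coeff (coeff p n4) n3).
            SIGMA n1:?S (coeff (coeff (coeff p n4) n3) n2). ?S (coeff (coeff (coeff (coeff p n4) n3) n2) n1)"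
  have "finite ?T" by (intro finite_SigmaI finite_coeff_nz)
  moreover have "supp5 p \<subseteq> tup ` ?T"
  proof
    fix k assume k: "k \<in> supp5 p"
    have "k = tup (k 4, k 3, k 2, k 1, k 0)"
      using k by (auto simp: supp5_def tup_def fun_eq_iff)
    moreover have "(k 4, k 3, k 2, k 1, k 0) \<in> ?T"
      using k by (auto simp: supp5_def coeff5_def)
    ultimately show "k \<in> tup ` ?T" by blast
  qed
  ultimately show ?thesis by (meson finite_subset finite_imageI)
qed

lemma sum_delta5:
  assumes "finite K" "\<And>k. k \<in> K \<Longrightarrow> \<forall>i\<ge>5. k i = 0"
  shows "(\<Sum>k\<in>K. coeff5 (monoc (c k) k) j) = (if restr j \<in> K then c (restr j) else 0)"
proof -
  have "(\<Sum>k\<in>K. coeff5 (monoc (c k) k) j) = (\<Sum>k\<in>K. if k = restr j then c k else 0)"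
  proof (rule sum.cong[OF refl])
    fix k assume "k \<in> K"
    then have k5: "\<forall>i\<ge>5. k i = 0" using assms(2) by blast
    have "(j 0 = k 0 \<and> j 1 = k 1 \<and> j 2 = k 2 \<and> j 3 = k 3 \<and> j 4 = k 4) \<longleftrightarrow> k = restr j"
    proof
      assume h: "j 0 = k 0 \<and> j 1 = k 1 \<and> j 2 = k 2 \<and> j 3 = k 3 \<and> j 4 = k 4"
      show "k = restr j"
      proof
        fix i show "k i = restr j i"
          using h k5 by (cases "i < 5") (auto simp: restr_def less_Suc_eq numeral_eq_Suc)
      qed
    qed (auto simp: restr_def)
    then show "coeff5 (monoc (c k) k) j = (if k = restr j then c k else 0)"
      by (simp add: coeff5_monoc)
  qed
  also have "\<dots> = (if restr j \<in> K then c (restr j) else 0)"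
    using assms(1) by (simp add: sum.delta')
  finally show ?thesis .
qed

lemma restr_supp: "restr j \<in> supp5 p \<longleftrightarrow> coeff5 p j \<noteq> 0"
  unfolding supp5_def using coeff5_restr[of p j] by (auto simp: restr_def)

lemma expansion5: "p = (\<Sum>k\<in>supp5 p. monoc (coeff5 p k) k)"
proof (rule coeff5_ext)
  fix j
  have "coeff5 (\<Sum>k\<in>supp5 p. monoc (coeff5 p k) k) j = (if restr j \<in> supp5 p then coeff5 p (restr j) else 0)"
    unfolding coeff5_sum by (rule sum_delta5[OF finite_supp5]) (auto simp: supp5_def)
  then show "coeff5 p j = coeff5 (\<Sum>k\<in>supp5 p. monoc (coeff5 p k) k) j"
    by (auto simp: restr_supp)
qed

lemma eval5_expansion: "eval5 p x = (\<Sum>k\<in>supp5 p. coeff5 p k * xmon k x)"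
  by (subst expansion5) simp

lemma poly_const_inj:
  fixes p q :: "'a::idom poly poly"
  assumes "infinite S" "\<forall>c\<in>S. poly p [:c:] = poly q [:c:]"
  shows "p = q"
proof (rule ccontr)
  assume "p \<noteq> q"
  then have "p - q \<noteq> 0" by simp
  then have "finite {y. poly (p - q) y = 0}" by (rule poly_roots_finite)
  moreover have "(\<lambda>c. [:c:]) ` S \<subseteq> {y. poly (p - q) y = 0}" using assms(2) by auto
  moreover have "infinite ((\<lambda>c. [:c:]) ` S)"
    using assms(1) by (auto dest!: finite_imageD simp: inj_on_def)
  ultimately show False by (meson finite_subset)
qed

lemma inj_eval5:
  fixes p q :: "complex mpoly5"
  assumes "\<And>x. eval5 p x = eval5 q x"
  shows "p = q"
proof -
  let ?x = "\<lambda>x0 x1 x2 x3 x4 i. if i = 0 then x0 else if i = 1 then x1 else if i = 2 then x2 else if i = 3 then x3 else (x4::complex)"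
  have l1: "poly (poly (poly (poly p [:[:[:[:x4:]:]:]:]) [:[:[:x3:]:]:]) [:[:x2:]:]) [:x1:] =
            poly (poly (poly (poly q [:[:[:[:x4:]:]:]:]) [:[:[:x3:]:]:]) [:[:x2:]:]) [:x1:]" for x1 x2 x3 x4
    using assms[of "?x _ x1 x2 x3 x4"] unfolding poly_eq_poly_eq_iff[symmetric] by (auto simp: eval5_def fun_eq_iff)
  have l2: "poly (poly (poly p [:[:[:[:x4:]:]:]:]) [:[:[:x3:]:]:]) [:[:x2:]:] =
            poly (poly (poly q [:[:[:[:x4:]:]:]:]) [:[:[:x3:]:]:]) [:[:x2:]:]" for x2 x3 x4
    by (rule poly_const_inj[of "UNIV::complex set"]) (auto simp: l1 infinite_UNIV_char_0)
  have i1: "infinite (range (\<lambda>x::complex. [:x:]))"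
    by (auto dest!: finite_imageD simp: inj_on_def infinite_UNIV_char_0)
  have l3: "poly (poly p [:[:[:[:x4:]:]:]:]) [:[:[:x3:]:]:] =
            poly (poly q [:[:[:[:x4:]:]:]:]) [:[:[:x3:]:]:]" for x3 x4
    by (rule poly_const_inj[OF i1]) (auto simp: l2)
  have i2: "infinite (range (\<lambda>x::complex. [:[:x:]:]))"
    by (auto dest!: finite_imageD simp: inj_on_def infinite_UNIV_char_0)
  have l4: "poly p [:[:[:[:x4:]:]:]:] = poly q [:[:[:[:x4:]:]:]:]" for x4
    by (rule poly_const_inj[OF i2]) (auto simp: l3)
  have i3: "infinite (range (\<lambda>x::complex. [:[:[:x:]:]:]))"
    by (auto dest!: finite_imageD simp: inj_on_def infinite_UNIV_char_0)
  show "p = q"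
    by (rule poly_const_inj[OF i3]) (auto simp: l4)
qed

lemma uniq5:
  fixes c :: "(nat \<Rightarrow> nat) \<Rightarrow> complex"
  assumes K: "finite K" "\<And>k. k \<in> K \<Longrightarrow> \<forall>i\<ge>5. k i = 0"
    and z: "\<And>x. (\<Sum>k\<in>K. c k * xmon k x) = 0"
    and k: "k \<in> K"
  shows "c k = 0"
proof -
  let ?q = "\<Sum>k\<in>K. monoc (c k) k"
  have "?q = 0" by (rule inj_eval5) (simp add: z)
  then have "coeff5 ?q k = 0" by simp
  moreover have "restr k = k" using K(2)[OF k] by (auto simp: restr_def fun_eq_iff)
  ultimately show ?thesis
    using sum_delta5[OF K, of c k] k by (simp add: coeff5_sum)
qed

definition "es1 (u0::'a::comm_ring_1) u1 u2 u3 u4 = u0+u1+u2+u3+u4"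
definition "es2 (u0::'a::comm_ring_1) u1 u2 u3 u4 = u0*u1+u0*u2+u0*u3+u0*u4+u1*u2+u1*u3+u1*u4+u2*u3+u2*u4+u3*u4"
definition "es3 (u0::'a::comm_ring_1) u1 u2 u3 u4 = u0*u1*u2+u0*u1*u3+u0*u1*u4+u0*u2*u3+u0*u2*u4+u0*u3*u4+u1*u2*u3+u1*u2*u4+u1*u3*u4+u2*u3*u4"
definition "es4 (u0::'a::comm_ring_1) u1 u2 u3 u4 = u0*u1*u2*u3+u0*u1*u2*u4+u0*u1*u3*u4+u0*u2*u3*u4+u1*u2*u3*u4"
definition "es5 (u0::'a::comm_ring_1) u1 u2 u3 u4 = u0*u1*u2*u3*u4"
definition "Qe (a1::'a::comm_ring_1) a2 a3 a4 a5 =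
   (a1^2 - 4*a2)^4 - 128*a4*(a1^2 - 4*a2)^2 + 4096*a4^2 - 2048*a5*(a1^3 - 4*a1*a2 + 8*a3)"
definition "Pf (u0::'a::comm_ring_1) u1 u2 u3 u4 =
   Qe (es1 u0 u1 u2 u3 u4) (es2 u0 u1 u2 u3 u4) (es3 u0 u1 u2 u3 u4) (es4 u0 u1 u2 u3 u4) (es5 u0 u1 u2 u3 u4)"

lemma rh_Pf: "rh f \<Longrightarrow> f (Pf a b c d e) = Pf (f a) (f b) (f c) (f d) (f e)"
  by (simp add: Pf_def Qe_def es1_def es2_def es3_def es4_def es5_def rh_simps)

definition "Pr16 (y0::'a::comm_ring_1) y1 y2 y3 y4 =
  (\<Prod>i1\<in>{0..1::nat}. \<Prod>i2\<in>{0..1::nat}. \<Prod>i3\<in>{0..1::nat}. \<Prod>i4\<in>{0..1::nat}.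
       y0 + (-1)^i1 * y1 + (-1)^i2 * y2 + (-1)^i3 * y3 + (-1)^i4 * y4)"

lemma prod01: "(\<Prod>i\<in>{0..1::nat}. f i) = f 0 * f 1"
proof -
  have "{0..1::nat} = {0,1}" by auto
  then show ?thesis by simp
qed

lemma Pr16_Pf: "Pr16 y0 y1 y2 y3 (y4::complex) = Pf (y0^2) (y1^2) (y2^2) (y3^2) (y4^2)"
  unfolding Pr16_def prod01 Pf_def Qe_def es1_def es2_def es3_def es4_def es5_def
  by simp algebra

definition Mf :: "(nat \<Rightarrow> 'a::comm_ring_1) \<Rightarrow> nat \<Rightarrow> 'a" where
  "Mf s j = (\<Prod>i\<in>{0..4::nat} - {j}. s i)"

lemma Delta_Pr16: "Delta_sqrt s = Pr16 (Mf s 0) (Mf s 1) (Mf s 2) (Mf s 3) (Mf s 4)"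
  unfolding Delta_sqrt_def Pr16_def Mf_def Let_def ..

definition Xv :: "nat \<Rightarrow> 'a::comm_ring_1 mpoly5" where
  "Xv i = monoc 1 (\<lambda>j. if j = i then 1 else 0)"

lemma eval5_Xv[simp]: "i < 5 \<Longrightarrow> eval5 (Xv i) x = x i"
  by (auto simp: Xv_def xmon_def less_Suc_eq numeral_eq_Suc)

definition MX :: "nat \<Rightarrow> 'a::comm_ring_1 mpoly5" where
  "MX j = (\<Prod>i\<in>{0..4::nat} - {j}. Xv i)"

definition Dpoly :: "rat mpoly5" where
  "Dpoly = Pf (MX 0) (MX 1) (MX 2) (MX 3) (MX 4)"

lemma rh_of_rat: "rh (of_rat :: rat \<Rightarrow> 'a::field_char_0)"
  unfolding rh_def by (simp add: of_rat_add of_rat_mult)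

lemma map5_monoc: "f 0 = 0 \<Longrightarrow> map5 f (monoc c k) = monoc (f c) k"
  by (simp add: map5_def monoc_def map_poly_monom)

lemma rh_g: "rh (\<lambda>p. eval5 (map5 (of_rat :: rat \<Rightarrow> complex) p) x)"
  by (rule rh_comp[OF rh_eval5 rh_map5[OF rh_of_rat]])

lemma g_Xv: "i < 5 \<Longrightarrow> eval5 (map5 (of_rat :: rat \<Rightarrow> complex) (Xv i)) x = x i"
  by (auto simp: Xv_def map5_monoc xmon_def less_Suc_eq numeral_eq_Suc)

lemma g_MX: "eval5 (map5 (of_rat :: rat \<Rightarrow> complex) (MX j)) x = Mf x j"
  unfolding MX_def Mf_def rh_prod[OF rh_g] by (intro prod.cong) (auto simp: g_Xv)

lemma eval_D: "eval5 (map5 (of_rat :: rat \<Rightarrow> complex) Dpoly) x = Pf (Mf x 0) (Mf x 1) (Mf x 2) (Mf x 3) (Mf x 4)"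
  unfolding Dpoly_def rh_Pf[OF rh_g] g_MX ..

lemma Mf_sq: "Mf (\<lambda>i. s i ^ 2) j = (Mf s j)^2"
  by (simp add: Mf_def prod_power_distrib)

theorem D_delta: "eval5 (map5 (of_rat :: rat \<Rightarrow> complex) Dpoly) (\<lambda>i. (s i)^2) = Delta_sqrt s"
  unfolding eval_D Mf_sq Delta_Pr16 Pr16_Pf ..

lemma Pf_hom: "Pf (c*a) (c*b) (c*d) (c*e) (c*(f::complex)) = c^8 * Pf a b d e f"
proof -
  have "es1 (c*a) (c*b) (c*d) (c*e) (c*f) = c * es1 a b d e f"
       "es2 (c*a) (c*b) (c*d) (c*e) (c*f) = c^2 * es2 a b d e f"
       "es3 (c*a) (c*b) (c*d) (c*e) (c*f) = c^3 * es3 a b d e f"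
       "es4 (c*a) (c*b) (c*d) (c*e) (c*f) = c^4 * es4 a b d e f"
       "es5 (c*a) (c*b) (c*d) (c*e) (c*f) = c^5 * es5 a b d e f"
    by (simp_all add: es1_def es2_def es3_def es4_def es5_def algebra_simps power2_eq_square power3_eq_cube power4_eq_xxxx
          power_numeral_reduce)
  moreover have "Qe (c*A1) (c^2*A2) (c^3*A3) (c^4*A4) (c^5*A5) = c^8 * Qe A1 A2 A3 A4 A5" for A1 A2 A3 A4 A5 :: complex
    unfolding Qe_def by algebra
  ultimately show ?thesis unfolding Pf_def by simp
qed

lemma Mf_scale: "j < 5 \<Longrightarrow> Mf (\<lambda>i. c * x i) j = c^4 * Mf x j"
proof -
  assume j: "j < 5"
  have "card ({0..4::nat} - {j}) = 4" using j by (simp add: card_Diff_singleton)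
  then show ?thesis by (simp add: Mf_def prod.distrib)
qed

theorem D_hom: "eval5 (map5 (of_rat :: rat \<Rightarrow> complex) Dpoly) (\<lambda>i. c * x i) = c^32 * eval5 (map5 (of_rat :: rat \<Rightarrow> complex) Dpoly) x"
  unfolding eval_D by (simp add: Mf_scale Pf_hom flip: power_mult)

definition "Pfun (v::nat \<Rightarrow> 'a::comm_ring_1) = Pf (v 0) (v 1) (v 2) (v 3) (v 4)"
definition "ps m (v::nat \<Rightarrow> 'a::comm_ring_1) = (\<Sum>i<5. v i ^ m)"

lemma sum5: "(\<Sum>i<(5::nat). f i) = f 0 + f 1 + f 2 + f 3 + (f 4 :: 'a::comm_monoid_add)"
  by (simp add: numeral_eq_Suc add.assoc)

lemma prod5: "(\<Prod>i<(5::nat). f i) = f 0 * f 1 * f 2 * f 3 * (f 4 :: 'a::comm_monoid_mult)"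
  by (simp add: numeral_eq_Suc mult.assoc)

lemma ps_perm: "\<sigma> permutes {..<5} \<Longrightarrow> ps m (v \<circ> \<sigma>) = ps m v"
  unfolding ps_def by (subst sum.permute[of \<sigma>]) (simp_all add: comp_def)

definition "E1 v = es1 (v 0) (v 1) (v 2) (v 3) (v 4)"
definition "E2 v = es2 (v 0) (v 1) (v 2) (v 3) (v 4)"
definition "E3 v = es3 (v 0) (v 1) (v 2) (v 3) (v 4)"
definition "E4 v = es4 (v 0) (v 1) (v 2) (v 3) (v 4)"
definition "E5 v = es5 (v 0) (v 1) (v 2) (v 3) (v 4)"

lemma newton:
  fixes v :: "nat \<Rightarrow> complex"
  shows "E1 v = ps 1 v"
    "2 * E2 v = E1 v * ps 1 v - ps 2 v"
    "3 * E3 v = E2 v * ps 1 v - E1 v * ps 2 v + ps 3 v"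
    "4 * E4 v = E3 v * ps 1 v - E2 v * ps 2 v + E1 v * ps 3 v - ps 4 v"
    "5 * E5 v = E4 v * ps 1 v - E3 v * ps 2 v + E2 v * ps 3 v - E1 v * ps 4 v + ps 5 v"
  unfolding E1_def E2_def E3_def E4_def E5_def ps_def sum5 es1_def es2_def es3_def es4_def es5_def
  by algebra+

lemma Pfun_perm:
  fixes v :: "nat \<Rightarrow> complex"
  assumes s: "\<sigma> permutes {..<5}"
  shows "Pfun (v \<circ> \<sigma>) = Pfun v"
proof -
  note p = ps_perm[OF s, of _ v]
  have 1: "E1 (v \<circ> \<sigma>) = E1 v" using newton(1)[of v] newton(1)[of "v \<circ> \<sigma>"] p by simp
  have "2 * E2 (v \<circ> \<sigma>) = 2 * E2 v" using newton(2)[of v] newton(2)[of "v \<circ> \<sigma>"] p 1 by simp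
  then have 2: "E2 (v \<circ> \<sigma>) = E2 v" by simp
  have "3 * E3 (v \<circ> \<sigma>) = 3 * E3 v" using newton(3)[of v] newton(3)[of "v \<circ> \<sigma>"] p 1 2 by simp
  then have 3: "E3 (v \<circ> \<sigma>) = E3 v" by simp
  have "4 * E4 (v \<circ> \<sigma>) = 4 * E4 v" using newton(4)[of v] newton(4)[of "v \<circ> \<sigma>"] p 1 2 3 by simp
  then have 4: "E4 (v \<circ> \<sigma>) = E4 v" by simp
  have "5 * E5 (v \<circ> \<sigma>) = 5 * E5 v" using newton(5)[of v] newton(5)[of "v \<circ> \<sigma>"] p 1 2 3 4 by simp
  then have 5: "E5 (v \<circ> \<sigma>) = E5 v" by simp
  have "Pfun w = Qe (E1 w) (E2 w) (E3 w) (E4 w) (E5 w)" for w :: "nat \<Rightarrow> complex"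
    by (simp add: Pfun_def Pf_def E1_def E2_def E3_def E4_def E5_def)
  then show ?thesis using 1 2 3 4 5 by simp
qed

lemma Mf_perm:
  assumes s: "\<sigma> permutes {..<5}" and j: "j < 5"
  shows "Mf (x \<circ> \<sigma>) j = Mf x (\<sigma> j)"
proof -
  have e: "{0..4::nat} = {..<5}" by auto
  have inj: "inj_on \<sigma> ({..<5} - {j})" using permutes_inj[OF s] by (auto simp: inj_on_def inj_def)
  have img: "\<sigma> ` ({..<5} - {j}) = {..<5} - {\<sigma> j}"
  proof -
    have "\<sigma> ` ({..<5} - {j}) = \<sigma> ` {..<5} - \<sigma> ` {j}"
      using permutes_inj[OF s] by (simp add: image_set_diff)
    then show ?thesis using permutes_image[OF s] by simp
  qed
  have "Mf x (\<sigma> j) = (\<Prod>i\<in>\<sigma> ` ({..<5} - {j}). x i)" unfolding Mf_def e img ..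
  also have "\<dots> = (\<Prod>i\<in>{..<5} - {j}. x (\<sigma> i))" by (rule prod.reindex[OF inj, unfolded comp_def])
  finally show ?thesis unfolding Mf_def e by simp
qed

lemma evalD_perm:
  assumes s: "\<sigma> permutes {..<5}"
  shows "eval5 (map5 (of_rat :: rat \<Rightarrow> complex) Dpoly) (x \<circ> \<sigma>) = eval5 (map5 (of_rat :: rat \<Rightarrow> complex) Dpoly) x"
proof -
  have lt: "\<sigma> i < 5" if "i < 5" for i using permutes_in_image[OF s] that by auto
  have "eval5 (map5 (of_rat :: rat \<Rightarrow> complex) Dpoly) (x \<circ> \<sigma>) = Pfun (Mf x \<circ> \<sigma>)"
    unfolding eval_D Pfun_def using Mf_perm[OF s, of 0 x] Mf_perm[OF s, of 1 x] Mf_perm[OF s, of 2 x]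
      Mf_perm[OF s, of 3 x] Mf_perm[OF s, of 4 x] by simp
  also have "\<dots> = Pfun (Mf x)" by (rule Pfun_perm[OF s])
  finally show ?thesis unfolding eval_D Pfun_def .
qed

lemma coeff5_monoc_restr:
  assumes "\<forall>i\<ge>5. k i = 0"
  shows "coeff5 (monoc a k) j = (if k = restr j then a else 0)"
proof -
  have "(j 0 = k 0 \<and> j 1 = k 1 \<and> j 2 = k 2 \<and> j 3 = k 3 \<and> j 4 = k 4) \<longleftrightarrow> k = restr j"
  proof
    assume h: "j 0 = k 0 \<and> j 1 = k 1 \<and> j 2 = k 2 \<and> j 3 = k 3 \<and> j 4 = k 4"
    show "k = restr j"
    proof
      fix i show "k i = restr j i"
        using h assms by (cases "i < 5") (auto simp: restr_def less_Suc_eq numeral_eq_Suc)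
    qed
  qed (auto simp: restr_def)
  then show ?thesis by (simp add: coeff5_monoc)
qed

lemma xmon_prod: "xmon k x = (\<Prod>i<5. x i ^ k i)"
  by (simp add: xmon_def prod5)

lemma coeff_perm_general:
  fixes P :: "complex mpoly5"
  assumes s: "\<sigma> permutes {..<5}"
    and ev: "\<And>x. eval5 P (x \<circ> \<sigma>) = eval5 P x"
  shows "coeff5 P (k \<circ> \<sigma>) = coeff5 P k"
proof -
  let ?\<tau> = "inv \<sigma>"
  have t: "?\<tau> permutes {..<5}" by (rule permutes_inv[OF s])
  have st: "\<sigma> \<circ> ?\<tau> = id" "?\<tau> \<circ> \<sigma> = id" using permutes_inv_o[OF s] by auto
  let ?K = "supp5 P"
  let ?c = "coeff5 P"
  let ?Q = "\<Sum>k\<in>?K. monoc (?c k) (k \<circ> ?\<tau>)"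
  have xm: "xmon k (x \<circ> \<sigma>) = xmon (k \<circ> ?\<tau>) x" for k x
  proof -
    have "xmon (k \<circ> ?\<tau>) x = (\<Prod>i<5. x i ^ k (?\<tau> i))" by (simp add: xmon_prod)
    also have "\<dots> = (\<Prod>i<5. x (\<sigma> i) ^ k (?\<tau> (\<sigma> i)))"
      by (subst prod.permute[OF s]) (simp add: comp_def)
    also have "\<dots> = (\<Prod>i<5. x (\<sigma> i) ^ k i)"
      using st(2) by (simp add: pointfree_idE)
    finally show ?thesis by (simp add: xmon_prod)
  qed
  have "?Q = P"
  proof (rule inj_eval5)
    fix x
    have "eval5 ?Q x = (\<Sum>k\<in>?K. ?c k * xmon k (x \<circ> \<sigma>))" by (simp add: xm)
    also have "\<dots> = eval5 P (x \<circ> \<sigma>)" by (simp add: eval5_expansion[of P "x \<circ> \<sigma>"])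
    finally show "eval5 ?Q x = eval5 P x" using ev by simp
  qed
  have rk: "\<forall>i\<ge>5. k i = 0" if "k \<in> ?K" for k using that by (simp add: supp5_def)
  have fix5: "\<sigma> i = i" "?\<tau> i = i" if "i \<ge> 5" for i
    using permutes_not_in[OF s] permutes_not_in[OF t] that by auto
  have "coeff5 P j = coeff5 ?Q j" for j using \<open>?Q = P\<close> by simp
  also have "coeff5 ?Q j = (\<Sum>k\<in>?K. if k = restr j \<circ> \<sigma> then ?c k else 0)" for j
    unfolding coeff5_sum
  proof (rule sum.cong[OF refl])
    fix k assume k: "k \<in> ?K"
    have r: "\<forall>i\<ge>5. (k \<circ> ?\<tau>) i = 0" using rk[OF k] fix5 by simp
    have eq: "(k \<circ> ?\<tau> = restr j) \<longleftrightarrow> (k = restr j \<circ> \<sigma>)"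
    proof
      assume "k \<circ> ?\<tau> = restr j"
      then have "k \<circ> ?\<tau> \<circ> \<sigma> = restr j \<circ> \<sigma>" by simp
      then show "k = restr j \<circ> \<sigma>" using st(2) by (simp add: comp_assoc)
    next
      assume "k = restr j \<circ> \<sigma>"
      then show "k \<circ> ?\<tau> = restr j" using st(1) by (simp add: comp_assoc)
    qed
    have c: "coeff5 (monoc (?c k) (k \<circ> ?\<tau>)) j = (if k \<circ> ?\<tau> = restr j then ?c k else 0)"
      by (rule coeff5_monoc_restr[OF r])
    then show "coeff5 (monoc (?c k) (k \<circ> ?\<tau>)) j = (if k = restr j \<circ> \<sigma> then ?c k else 0)"
      unfolding eq .
  qed
  also have "(\<Sum>k\<in>?K. if k = restr j \<circ> \<sigma> then ?c k else 0) = ?c (restr j \<circ> \<sigma>)" for j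
  proof -
    have "restr j \<circ> \<sigma> \<notin> ?K \<Longrightarrow> ?c (restr j \<circ> \<sigma>) = 0"
      using fix5 by (auto simp: supp5_def restr_def)
    then show ?thesis using finite_supp5[of P] by (auto simp: sum.delta')
  qed
  finally have *: "coeff5 P j = coeff5 P (restr j \<circ> \<sigma>)" for j .
  have "restr (k \<circ> \<sigma>) = restr k \<circ> \<sigma>"
  proof
    fix i
    show "restr (k \<circ> \<sigma>) i = (restr k \<circ> \<sigma>) i"
    proof (cases "i < 5")
      case True
      then have "\<sigma> i < 5" using permutes_in_image[OF s] by auto
      then show ?thesis using True by (simp add: restr_def)
    next
      case False then show ?thesis using fix5 by (simp add: restr_def)
    qed
  qed
  then have "coeff5 P (k \<circ> \<sigma>) = coeff5 P (restr k \<circ> \<sigma>)" by (metis coeff5_restr)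
  then show ?thesis using *[of k] by simp
qed

lemma coeff_hom_general:
  fixes P :: "complex mpoly5"
  assumes ev: "\<And>x. eval5 P (\<lambda>i. 2 * x i) = 2^d * eval5 P x"
    and nz: "coeff5 P k \<noteq> 0"
  shows "(\<Sum>i<5. k i) = d"
proof -
  let ?K = "supp5 P"
  let ?c = "coeff5 P"
  have xm: "xmon k (\<lambda>i. 2 * x i) = 2 ^ (\<Sum>i<5. k i) * xmon k (x :: nat \<Rightarrow> complex)" for k x
    by (simp add: xmon_prod power_mult_distrib prod.distrib power_sum)
  have z: "(\<Sum>k\<in>?K. (?c k * 2 ^ (\<Sum>i<5. k i) - 2^d * ?c k) * xmon k x) = 0" for x
  proof -
    have "eval5 P (\<lambda>i. 2 * x i) = (\<Sum>k\<in>?K. ?c k * 2 ^ (\<Sum>i<5. k i) * xmon k x)"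
      unfolding eval5_expansion[of P "\<lambda>i. 2 * x i"] xm by (simp add: mult.assoc)
    moreover have "2^d * eval5 P x = (\<Sum>k\<in>?K. 2^d * ?c k * xmon k x)"
      by (simp add: eval5_expansion[of P x] sum_distrib_left mult_ac)
    ultimately show ?thesis using ev[of x] by (simp add: algebra_simps sum_subtractf)
  qed
  have rk: "restr k \<in> ?K" using nz by (simp add: restr_supp)
  have "(?c (restr k) * 2 ^ (\<Sum>i<5. restr k i) - 2^d * ?c (restr k)) = 0"
    by (rule uniq5[OF finite_supp5 _ z rk]) (simp add: supp5_def)
  then have "(2::complex) ^ (\<Sum>i<5. restr k i) = 2 ^ d" using nz by simp
  then have "(\<Sum>i<5. restr k i) = d"
    by (metis of_nat_eq_iff of_nat_numeral of_nat_power power_inject_exp one_less_numeral_iff semiring_norm(76))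
  then show ?thesis by (simp add: restr_def)
qed

lemma prime_dvd_prodE:
  fixes p :: "'a::comm_semiring_1"
  assumes "prime_elem p" "finite A" "p dvd prod f A"
  shows "\<exists>a\<in>A. p dvd f a"
  using assms(2,3)
proof (induction A rule: finite_induct)
  case empty then show ?case using prime_elem_not_unit[OF assms(1)] by simp
next
  case (insert a A)
  then have "p dvd f a * prod f A" by simp
  then have "p dvd f a \<or> p dvd prod f A" using prime_elem_dvd_multD[OF assms(1)] by blast
  then show ?case using insert by blast
qed

lemma dvd_prod_primes:
  fixes p :: "'b \<Rightarrow> 'a::factorial_semiring_gcd"
  assumes "finite U" "\<And>a. a \<in> U \<Longrightarrow> prime_elem (p a)"
    and "d dvd prod p U"
  shows "\<exists>S\<subseteq>U. d dvd prod p S \<and> prod p S dvd d"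
  using assms
proof (induction U arbitrary: d rule: finite_induct)
  case empty
  then show ?case by auto
next
  case (insert a U)
  have pa: "prime_elem (p a)" using insert.prems by simp
  have dv: "d dvd p a * prod p U" using insert by simp
  show ?case
  proof (cases "p a dvd d")
    case True
    then obtain d' where d': "d = p a * d'" by blast
    have "p a \<noteq> 0" using pa by auto
    then have "d' dvd prod p U" using dv d' by simp
    then obtain S where S: "S \<subseteq> U" "d' dvd prod p S" "prod p S dvd d'"
      using insert by auto
    have "a \<notin> S" using S(1) insert(2) by blast
    moreover have "finite S" using S(1) insert(1) finite_subset by blast
    ultimately have "prod p (insert a S) = p a * prod p S" by simp
    then show ?thesis using S d' by (intro exI[of _ "insert a S"]) (auto intro: mult_dvd_mono)
  next
    case False
    then have "coprime (p a) d" by (rule prime_elem_imp_coprime[OF pa])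
    then have "coprime d (p a)" by (simp add: coprime_commute)
    then have "d dvd prod p U" using dv coprime_dvd_mult_right_iff by blast
    then obtain S where S: "S \<subseteq> U" "d dvd prod p S" "prod p S dvd d"
      using insert by auto
    then show ?thesis by auto
  qed
qed

lemma prod_primes_subset:
  fixes p :: "'b \<Rightarrow> 'a::comm_semiring_1"
  assumes "finite U" "\<And>a. a \<in> U \<Longrightarrow> prime_elem (p a)"
    and "\<And>a b. a \<in> U \<Longrightarrow> b \<in> U \<Longrightarrow> p a dvd p b \<Longrightarrow> a = b"
    and "S \<subseteq> U" "S' \<subseteq> U" "prod p S dvd prod p S'"
  shows "S \<subseteq> S'"
proof
  fix a assume a: "a \<in> S"
  have fin: "finite S" "finite S'" using assms(1,4,5) finite_subset by auto
  have "p a dvd prod p S" using a fin by (simp add: dvd_prodI)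
  then have "p a dvd prod p S'" using assms(6) dvd_trans by blast
  then obtain b where b: "b \<in> S'" "p a dvd p b"
    using prime_dvd_prodE[OF assms(2) fin(2)] a assms(4) by blast
  then have "a = b" using assms(3) a b assms(4,5) by blast
  then show "a \<in> S'" using b by simp
qed

type_synonym tp = "nat \<times> nat \<times> nat \<times> nat"

definition EE :: "tp set" where "EE = {0..1} \<times> {0..1} \<times> {0..1} \<times> {0..1}"

definition flip :: "nat \<Rightarrow> tp \<Rightarrow> tp" where
  "flip j = (\<lambda>(a,b,c,d). if j = 1 then (1-a,b,c,d) else if j = 2 then (a,1-b,c,d)
      else if j = 3 then (a,b,1-c,d) else (a,b,c,1-d))"

lemma flip_EE: "e \<in> EE \<Longrightarrow> flip j e \<in> EE"
  by (auto simp: EE_def flip_def split: prod.splits)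

lemma flip_flip: "e \<in> EE \<Longrightarrow> flip j (flip j e) = e"
  by (auto simp: EE_def flip_def split: prod.splits)

lemma orbit:
  assumes S: "S \<subseteq> EE" and cl: "\<And>j e. j \<in> {1,2,3,4} \<Longrightarrow> e \<in> S \<Longrightarrow> flip j e \<in> S"
  shows "S = {} \<or> S = EE"
proof (cases "S = {}")
  case False
  then obtain a0 b0 c0 d0 where e0: "(a0,b0,c0,d0) \<in> S" by auto
  have r: "x \<in> {0..1::nat} \<Longrightarrow> y \<in> {0..1} \<Longrightarrow> y = x \<or> y = 1 - x" for x y by auto
  have "EE \<subseteq> S"
  proof
    fix e assume "e \<in> EE"
    then obtain a b c d where e: "e = (a,b,c,d)" "a \<in> {0..1}" "b \<in> {0..1}" "c \<in> {0..1}" "d \<in> {0..1}"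
      by (auto simp: EE_def)
    have in0: "a0 \<in> {0..1}" "b0 \<in> {0..1}" "c0 \<in> {0..1}" "d0 \<in> {0..1}" using e0 S by (auto simp: EE_def)
    have 1: "(a,b0,c0,d0) \<in> S"
      using r[OF in0(1) e(2)] e0 cl[of 1 "(a0,b0,c0,d0)"] by (auto simp: flip_def)
    have 2: "(a,b,c0,d0) \<in> S"
      using r[OF in0(2) e(3)] 1 cl[of 2 "(a,b0,c0,d0)"] by (auto simp: flip_def)
    have 3: "(a,b,c,d0) \<in> S"
      using r[OF in0(3) e(4)] 2 cl[of 3 "(a,b,c0,d0)"] by (auto simp: flip_def)
    have 4: "(a,b,c,d) \<in> S"
      using r[OF in0(4) e(5)] 3 cl[of 4 "(a,b,c,d0)"] by (auto simp: flip_def)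
    then show "e \<in> S" using e by simp
  qed
  then show ?thesis using S by auto
qed simp

lemma unit_const:
  fixes p :: "complex mpoly5"
  assumes "is_unit p" shows "\<exists>c. c \<noteq> 0 \<and> p = Cn c"
proof -
  obtain c4 where c4: "p = [:c4:]" "is_unit c4" using assms is_unit_poly_iff by blast
  obtain c3 where c3: "c4 = [:c3:]" "is_unit c3" using c4(2) is_unit_poly_iff by blast
  obtain c2 where c2: "c3 = [:c2:]" "is_unit c2" using c3(2) is_unit_poly_iff by blast
  obtain c1 where c1: "c2 = [:c1:]" "is_unit c1" using c2(2) is_unit_poly_iff by blast
  obtain c0 where c0: "c1 = [:c0:]" "is_unit c0" using c1(2) is_unit_poly_iff by blast
  show ?thesis using c0 c1 c2 c3 c4 by (auto simp: Cn_def)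
qed

lemma const_unit:
  assumes "(c::complex) \<noteq> 0" shows "is_unit (Cn c)"
proof -
  have "Cn c * Cn (1/c) = Cn (c * (1/c))" using rhD(4)[OF rh_Cn] by metis
  also have "\<dots> = 1" using assms rhD(2)[OF rh_Cn] by simp
  finally show ?thesis by (metis dvdI)
qed

definition sub :: "complex mpoly5 \<Rightarrow> (nat \<Rightarrow> complex mpoly5) \<Rightarrow> complex mpoly5" where
  "sub p q = eval5 (map5 Cn p) q"

lemma map_poly_idfun: "map_poly (\<lambda>x. x) = (\<lambda>x. x)" by (rule ext) simp

lemma map5_comp: "f 0 = 0 \<Longrightarrow> g 0 = 0 \<Longrightarrow> map5 f (map5 g p) = map5 (\<lambda>x. f (g x)) p"
  by (simp add: map5_def map_poly_map_poly comp_def)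

lemma eval5_sub: "eval5 (sub p q) x = eval5 p (\<lambda>i. eval5 (q i) x)"
proof -
  have "eval5 (map5 (\<lambda>r. eval5 r x) (map5 Cn p)) (\<lambda>i. eval5 (q i) x) = eval5 (eval5 (map5 Cn p) q) x"
    using eval5_hom[OF rh_eval5[of x], of "map5 Cn p" q] by simp
  moreover have "map5 (\<lambda>r. eval5 r x) (map5 Cn p) = p"
    by (subst map5_comp) (simp_all add: rhD[OF rh_Cn] map5_def map_poly_idfun)
  ultimately show ?thesis by (simp add: sub_def)
qed

lemma rh_sub: "rh (\<lambda>p. sub p q)"
  unfolding sub_def by (rule rh_comp[OF rh_eval5 rh_map5[OF rh_Cn]])

lemma eval5_cong: "(\<And>i. i < 5 \<Longrightarrow> x i = y i) \<Longrightarrow> eval5 p x = eval5 p y"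
  by (simp add: eval5_def)

definition phi :: "complex mpoly5 \<Rightarrow> complex mpoly5" where "phi p = sub p (\<lambda>i. Xv i ^ 2)"
definition tau :: "nat \<Rightarrow> complex mpoly5 \<Rightarrow> complex mpoly5" where
  "tau j p = sub p (\<lambda>i. if i = j then - Xv i else Xv i)"

lemma eval5_phi: "eval5 (phi p) x = eval5 p (\<lambda>i. x i ^ 2)"
  unfolding phi_def eval5_sub by (rule eval5_cong) simp

lemma eval5_tau: "eval5 (tau j p) x = eval5 p (\<lambda>i. if i = j then - x i else x i)"
  unfolding tau_def eval5_sub by (rule eval5_cong) simp

lemma rh_phi: "rh phi" unfolding phi_def[abs_def] by (rule rh_sub)
lemma rh_tau: "rh (tau j)" unfolding tau_def[abs_def] by (rule rh_sub)

lemma eval5_MX[simp]: "eval5 (MX j :: complex mpoly5) x = Mf x j"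
  unfolding MX_def Mf_def by (simp add: rh_prod[OF rh_eval5])

definition Lf :: "tp \<Rightarrow> complex mpoly5" where
  "Lf e = (case e of (a,b,c,d) \<Rightarrow> MX 0 + (-1)^a * MX 1 + (-1)^b * MX 2 + (-1)^c * MX 3 + (-1)^d * MX 4)"

lemma eval5_Lf: "eval5 (Lf (a,b,c,d)) x = Mf x 0 + (-1)^a * Mf x 1 + (-1)^b * Mf x 2 + (-1)^c * Mf x 3 + (-1)^d * Mf x 4"
  by (simp add: Lf_def)

definition Lprod :: "complex mpoly5" where "Lprod = (\<Prod>e\<in>EE. Lf e)"

lemma prod_EE: "(\<Prod>e\<in>EE. f e) = (\<Prod>a\<in>{0..1}. \<Prod>b\<in>{0..1}. \<Prod>c\<in>{0..1}. \<Prod>d\<in>{0..1}. f (a,b,c,d))"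
  unfolding EE_def prod.cartesian_product by (simp add: case_prod_eta)

lemma eval5_Lprod: "eval5 Lprod x = Delta_sqrt x"
  unfolding Lprod_def Delta_Pr16 Pr16_def prod_EE rh_prod[OF rh_eval5] eval5_Lf ..

lemma phi_D: "phi (map5 of_rat Dpoly) = Lprod"
  by (rule inj_eval5) (simp add: eval5_phi D_delta eval5_Lprod)

lemma tau_phi: "tau j (phi p) = phi p"
  by (rule inj_eval5) (simp add: eval5_phi eval5_tau, rule eval5_cong, simp)

lemma Mf_neg:
  assumes "i < 5" "j < 5"
  shows "Mf (\<lambda>l. if l = j then - x l else x l) i = (if i = j then Mf x i else - Mf x (i::nat) :: complex)"
proof (cases "i = j")
  case True
  have "(\<Prod>l\<in>{0..4}-{i}. if l = j then - x l else x l) = (\<Prod>l\<in>{0..4}-{i}. x l)"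
    using True by (intro prod.cong) auto
  then show ?thesis using True by (simp add: Mf_def)
next
  case False
  let ?A = "{0..4::nat} - {i}"
  have j: "j \<in> ?A" "finite ?A" using assms False by auto
  have "Mf (\<lambda>l. if l = j then - x l else x l) i = (- x j) * (\<Prod>l\<in>?A - {j}. x l)"
    unfolding Mf_def by (subst prod.remove[OF j(2) j(1)]) (auto intro!: prod.cong)
  also have "\<dots> = - (x j * (\<Prod>l\<in>?A - {j}. x l))" by simp
  also have "x j * (\<Prod>l\<in>?A - {j}. x l) = Mf x i"
    unfolding Mf_def by (subst prod.remove[OF j(2) j(1)]) simp
  finally show ?thesis using False by simp
qed

lemma tau_Lf:
  assumes j: "j \<in> {1,2,3,4}" and e: "e \<in> EE"
  shows "tau j (Lf e) = - Lf (flip j e)"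
proof (rule inj_eval5)
  fix x :: "nat \<Rightarrow> complex"
  obtain a b c d where abcd: "e = (a,b,c,d)" "a \<in> {0..1}" "b \<in> {0..1}" "c \<in> {0..1}" "d \<in> {0..1}"
    using e by (auto simp: EE_def)
  have j5: "j < 5" using j by auto
  have m: "Mf (\<lambda>l. if l = j then - x l else x l) i = (if i = j then Mf x i else - Mf x i)" if "i < 5" for i
    using Mf_neg[OF that j5] .
  have s: "y \<le> Suc 0 \<Longrightarrow> (-1::complex)^(Suc 0-y) = - ((-1)^y)" for y by (cases y) auto
  show "eval5 (tau j (Lf e)) x = eval5 (- Lf (flip j e)) x"
    using j abcd(2-5)
    by (auto simp: abcd(1) eval5_tau eval5_Lf m flip_def s algebra_simps)
qed

type_synonym B4 = "complex poly poly poly poly"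

definition ev4 :: "B4 \<Rightarrow> (nat \<Rightarrow> complex) \<Rightarrow> complex" where "ev4 q x = eval5 [:q:] x"

lemma rh_cp: "rh (\<lambda>q::'a::comm_ring_1. [:q:])"
  unfolding rh_def by (simp add: pCons_one)

lemma rh_ev4: "rh (\<lambda>q. ev4 q x)"
  unfolding ev4_def by (rule rh_comp[OF rh_eval5 rh_cp])

lemma eval5_pCons: "eval5 (pCons a p) x = ev4 a x + x 4 * eval5 p x"
  by (simp add: eval5_def ev4_def poly_pCons)

definition Yv :: "nat \<Rightarrow> B4" where
  "Yv i = (if i = 0 then [:[:[:[:0,1:]:]:]:] else if i = 1 then [:[:[:0,1:]:]:] else if i = 2 then [:[:0,1:]:] else [:0,1:])"

lemma ev4_Yv: "i < 4 \<Longrightarrow> ev4 (Yv i) x = x i"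
  by (auto simp: Yv_def ev4_def eval5_def less_Suc_eq numeral_eq_Suc)

lemma prime_X: "prime_elem ([:0,1:] :: 'a::{idom_divide,ring_gcd,factorial_semiring,semiring_Gcd,semiring_gcd_mult_normalize} poly)"
  by (rule prime_elem_linear_poly) simp_all

lemma prime_Yv: "prime_elem (Yv i)"
  by (simp add: Yv_def prime_elem_const_poly_iff prime_X)

definition Mw :: "nat \<Rightarrow> B4" where "Mw j = (\<Prod>i\<in>{0..3::nat} - {j}. Yv i)"
definition W4 :: B4 where "W4 = (\<Prod>i\<in>{0..3::nat}. Yv i)"

lemma ev4_Mw: "ev4 (Mw j) x = (\<Prod>i\<in>{0..3::nat} - {j}. x i)"
  unfolding Mw_def rh_prod[OF rh_ev4] by (intro prod.cong) (auto simp: ev4_Yv)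

lemma ev4_W4: "ev4 W4 x = (\<Prod>i\<in>{0..3::nat}. x i)"
  unfolding W4_def rh_prod[OF rh_ev4] by (intro prod.cong) (auto simp: ev4_Yv)

definition al :: "tp \<Rightarrow> B4" where
  "al e = (case e of (a,b,c,d) \<Rightarrow> Mw 0 + (-1)^a * Mw 1 + (-1)^b * Mw 2 + (-1)^c * Mw 3)"
definition be :: "tp \<Rightarrow> B4" where
  "be e = (case e of (a,b,c,d) \<Rightarrow> (-1)^d * W4)"

lemma Mf_split:
  "j < 4 \<Longrightarrow> Mf x j = x 4 * (\<Prod>i\<in>{0..3::nat} - {j}. x i)"
  "Mf x 4 = (\<Prod>i\<in>{0..3::nat}. x i)"
proof -
  assume j: "j < 4"
  have "{0..4::nat} - {j} = insert 4 ({0..3} - {j})" using j by auto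
  then show "Mf x j = x 4 * (\<Prod>i\<in>{0..3::nat} - {j}. x i)" by (simp add: Mf_def)
next
  have "{0..4::nat} - {4} = {0..3}" by auto
  then show "Mf x 4 = (\<Prod>i\<in>{0..3::nat}. x i)" by (simp add: Mf_def)
qed

lemma Lf_pCons: "Lf e = [:be e, al e:]"
proof (rule inj_eval5)
  fix x
  obtain a b c d where e: "e = (a,b,c,d)" by (cases e) auto
  have ev: "eval5 [:q:] x = ev4 q x" for q by (simp add: ev4_def)
  show "eval5 (Lf e) x = eval5 [:be e, al e:] x"
    by (simp add: e eval5_Lf eval5_pCons ev al_def be_def rh_simps[OF rh_ev4] ev4_Mw ev4_W4 Mf_split algebra_simps)
qed

lemma pt_prod:
  assumes "i < 4" "j < 4"
  shows "(\<Prod>l\<in>{0..3::nat} - {j}. if l = i then 0 else 1 :: complex) = (if j = i then 1 else 0)"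
proof (cases "j = i")
  case True then show ?thesis by (simp add: prod.neutral)
next
  case False
  then have "i \<in> {0..3::nat} - {j}" using assms by auto
  then have "(\<Prod>l\<in>{0..3::nat} - {j}. if l = i then 0 else 1 :: complex) = 0"
    by (intro prod_zero) auto
  then show ?thesis using False by simp
qed

lemma al_nz_pt: "e \<in> EE \<Longrightarrow> i < 4 \<Longrightarrow> ev4 (al e) (\<lambda>l. if l = i then 0 else 1) \<noteq> 0"
  by (auto simp: EE_def al_def rh_simps[OF rh_ev4] ev4_Mw pt_prod less_Suc_eq numeral_eq_Suc)

lemma Yv_not_dvd: assumes e: "e \<in> EE" and i: "i < 4" shows "\<not> Yv i dvd al e"
proof
  assume "Yv i dvd al e"
  then obtain q where q: "al e = Yv i * q" by blast
  let ?x = "\<lambda>l. if l = i then 0 else (1::complex)"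
  have "ev4 (al e) ?x = ev4 (Yv i) ?x * ev4 q ?x" unfolding q by (simp add: rhD[OF rh_ev4])
  also have "ev4 (Yv i) ?x = 0" using i by (simp add: ev4_Yv)
  finally show False using al_nz_pt[OF e i] by simp
qed

lemma prime_Lf: assumes e: "e \<in> EE" shows "prime_elem (Lf e)"
proof -
  have anz: "al e \<noteq> 0" using al_nz_pt[OF e, of 0] by (auto simp: rhD[OF rh_ev4])
  have "coprime (Yv i) (al e)" if "i \<in> {0..3}" for i
    using that by (intro prime_elem_imp_coprime prime_Yv Yv_not_dvd[OF e]) auto
  then have "coprime W4 (al e)" unfolding W4_def by (rule prod_coprime_left)
  moreover have "is_unit ((-1::B4)^d)" for d
    by (rule dvdI[of _ _ "(-1)^d"]) (simp flip: power_mult_distrib)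
  ultimately have "coprime (be e) (al e)"
    by (auto simp: be_def is_unit_left_imp_coprime split: prod.splits)
  then show ?thesis unfolding Lf_pCons by (intro prime_elem_linear_poly anz)
qed

lemma Mf_pt: "i < 5 \<Longrightarrow> j < 5 \<Longrightarrow> Mf (\<lambda>l. if l = i then 0 else 1) j = (if j = i then 1 else (0::complex))"
proof -
  assume ij: "i < 5" "j < 5"
  show ?thesis
  proof (cases "j = i")
    case True then show ?thesis unfolding Mf_def by (simp add: prod.neutral)
  next
    case False
    then have "i \<in> {0..4::nat} - {j}" using ij by auto
    then have "(\<Prod>l\<in>{0..4::nat} - {j}. if l = i then 0 else 1 :: complex) = 0"
      by (intro prod_zero) auto
    then show ?thesis using False unfolding Mf_def by simp
  qed
qed

lemma Lf_inj_dvd: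
  assumes e: "e \<in> EE" and e': "e' \<in> EE" and dv: "Lf e dvd Lf e'"
  shows "e = e'"
proof -
  obtain q where q: "Lf e' = Lf e * q" using dv by blast
  have "irreducible (Lf e')" using prime_Lf[OF e'] by (rule prime_elem_imp_irreducible)
  then have "is_unit (Lf e) \<or> is_unit q" using q irreducibleD by blast
  moreover have "\<not> is_unit (Lf e)" using prime_Lf[OF e] prime_elem_not_unit by blast
  ultimately have "is_unit q" by blast
  then obtain c where c: "q = Cn c" using unit_const by blast
  have ev: "eval5 (Lf e') x = eval5 (Lf e) x * c" for x using q c by simp
  let ?p = "\<lambda>i. (\<lambda>l. if l = i then 0 else (1::complex))"
  have "c = 1" using ev[of "?p 0"] e e' by (auto simp: EE_def eval5_Lf Mf_pt)
  then have eq: "eval5 (Lf e') x = eval5 (Lf e) x" for x using ev by simp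
  obtain a b cc d where abcd: "e = (a,b,cc,d)" by (cases e) auto
  obtain a' b' c' d' where abcd': "e' = (a',b',c',d')" by (cases e') auto
  have pm: "(-1::complex)^u = (-1)^v \<Longrightarrow> u \<le> 1 \<Longrightarrow> v \<le> 1 \<Longrightarrow> u = v" for u v
    by (cases u; cases v) auto
  have "a = a'" using eq[of "?p 1"] e e' pm[of a' a] by (auto simp: abcd abcd' EE_def eval5_Lf Mf_pt)
  moreover have "b = b'" using eq[of "?p 2"] e e' pm[of b' b] by (auto simp: abcd abcd' EE_def eval5_Lf Mf_pt)
  moreover have "cc = c'" using eq[of "?p 3"] e e' pm[of c' cc] by (auto simp: abcd abcd' EE_def eval5_Lf Mf_pt)
  moreover have "d = d'" using eq[of "?p 4"] e e' pm[of d' d] by (auto simp: abcd abcd' EE_def eval5_Lf Mf_pt)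
  ultimately show ?thesis using abcd abcd' by simp
qed

abbreviation Dc :: "complex mpoly5" where "Dc \<equiv> map5 of_rat Dpoly"

lemma rh_dvd: "rh f \<Longrightarrow> a dvd b \<Longrightarrow> f a dvd f b"
  by (auto simp: rhD elim!: dvdE)

lemma eval_Dc_csqrt: "eval5 Dc x = Delta_sqrt (\<lambda>i. csqrt (x i))"
  using D_delta[of "\<lambda>i. csqrt (x i)"] by simp

lemma Delta_one: "Delta_sqrt (\<lambda>_. 1) \<noteq> 0"
proof -
  have "Mf (\<lambda>_. 1::complex) j = 1" for j by (simp add: Mf_def)
  then show ?thesis
    by (simp add: Delta_Pr16 Pr16_Pf Pf_def Qe_def es1_def es2_def es3_def es4_def es5_def)
qed

lemma Delta_zero: "Delta_sqrt (\<lambda>_. 0) = 0"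
proof -
  have "Mf (\<lambda>_. 0::complex) j = 0" for j unfolding Mf_def
    by (rule prod_zero) (simp_all, presburger)
  then show ?thesis
    by (simp add: Delta_Pr16 Pr16_Pf Pf_def Qe_def es1_def es2_def es3_def es4_def es5_def)
qed

lemma Dc_nz: "Dc \<noteq> 0"
proof
  assume "Dc = 0"
  then have "eval5 Dc (\<lambda>_. 1) = 0" by simp
  then show False using eval_Dc_csqrt[of "\<lambda>_. 1"] Delta_one by simp
qed

lemma Lprod_nz: "Lprod \<noteq> 0"
proof
  assume "Lprod = 0"
  then have "eval5 Lprod (\<lambda>_. 1) = 0" by simp
  then show False using eval5_Lprod Delta_one by simp
qed

lemma phi_unit: assumes "is_unit (phi F)" shows "is_unit F"
proof -
  obtain c where c: "c \<noteq> 0" "phi F = Cn c" using unit_const[OF assms] by blast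
  have "F = Cn c"
  proof (rule inj_eval5)
    fix y
    have "eval5 F y = eval5 F (\<lambda>i. (csqrt (y i))^2)" by simp
    also have "\<dots> = eval5 (phi F) (\<lambda>i. csqrt (y i))" by (simp add: eval5_phi)
    finally show "eval5 F y = eval5 (Cn c) y" using c by simp
  qed
  then show ?thesis using const_unit[OF c(1)] by simp
qed

lemma tau_prod:
  assumes j: "j \<in> {1,2,3,4}" and S: "S \<subseteq> EE"
  shows "tau j (\<Prod>e\<in>S. Lf e) = (-1)^card S * (\<Prod>e\<in>flip j ` S. Lf e)"
proof -
  have inj: "inj_on (flip j) S"
    using S flip_flip by (metis inj_on_inverseI subsetD)
  have "tau j (\<Prod>e\<in>S. Lf e) = (\<Prod>e\<in>S. - Lf (flip j e))"
    unfolding rh_prod[OF rh_tau] using S by (intro prod.cong) (auto simp: tau_Lf[OF j])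
  also have "\<dots> = (-1)^card S * (\<Prod>e\<in>S. Lf (flip j e))" by (rule prod_uminus)
  also have "(\<Prod>e\<in>S. Lf (flip j e)) = (\<Prod>e\<in>flip j ` S. Lf e)"
    by (rule prod.reindex[OF inj, symmetric, unfolded comp_def])
  finally show ?thesis .
qed

theorem irred_Dc: "irreducible Dc"
proof (rule irreducibleI)
  show "Dc \<noteq> 0" by (rule Dc_nz)
  show "\<not> is_unit Dc"
  proof
    assume "is_unit Dc"
    then obtain c where c: "c \<noteq> 0" "Dc = Cn c" using unit_const by blast
    have "eval5 Dc (\<lambda>_. 0) = 0" using eval_Dc_csqrt[of "\<lambda>_. 0"] Delta_zero by simp
    then show False using c by simp
  qed
  fix F G assume fg: "Dc = F * G"
  have "phi Dc = phi F * phi G" unfolding fg by (rule rhD(4)[OF rh_phi])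
  then have pfg: "phi F * phi G = Lprod" using phi_D by simp
  have fin: "finite EE" by (simp add: EE_def)
  have "prod Lf EE = phi F * phi G" using pfg unfolding Lprod_def by simp
  then have "phi F dvd prod Lf EE" by (rule dvdI)
  from dvd_prod_primes[OF fin prime_Lf this]
  obtain S where S: "S \<subseteq> EE" "phi F dvd prod Lf S" "prod Lf S dvd phi F"
    by blast
  have cl: "flip j e \<in> S" if j: "j \<in> {1,2,3,4}" and e: "e \<in> S" for j e
  proof -
    let ?T = "flip j ` S"
    have T: "?T \<subseteq> EE" using S(1) flip_EE by auto
    have "tau j (prod Lf S) dvd tau j (phi F)" by (rule rh_dvd[OF rh_tau S(3)])
    then have "(-1)^card S * prod Lf ?T dvd phi F" by (simp add: tau_prod[OF j S(1)] tau_phi)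
    then have "prod Lf ?T dvd phi F" using dvd_mult_right by blast
    then have "prod Lf ?T dvd prod Lf S" using S(2) dvd_trans by blast
    from prod_primes_subset[OF fin prime_Lf Lf_inj_dvd T S(1) this] have "?T \<subseteq> S" by simp
    then show ?thesis using e by blast
  qed
  have "S = {} \<or> S = EE" by (rule orbit[OF S(1) cl])
  then show "is_unit F \<or> is_unit G"
  proof
    assume "S = {}"
    then have "is_unit (phi F)" using S(2) by simp
    then show ?thesis using phi_unit by blast
  next
    assume "S = EE"
    then have "Lprod dvd phi F" using S(3) unfolding Lprod_def by simp
    then have "phi F * phi G dvd phi F * 1" unfolding pfg[symmetric] by simp
    moreover have "phi F \<noteq> 0" using pfg Lprod_nz by auto
    ultimately have "is_unit (phi G)" by simp
    then show ?thesis using phi_unit by blast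
  qed
qed

lemma coeff5_map5: "f 0 = 0 \<Longrightarrow> coeff5 (map5 f p) k = f (coeff5 p k)"
  by (simp add: coeff5_def map5_def coeff_map_poly)

theorem mainTheorem1:
  shows "\<exists>D :: rat mpoly5.
     (\<forall>s :: nat \<Rightarrow> complex. eval5 (map5 of_rat D) (\<lambda>i. (s i)^2) = Delta_sqrt s)
   \<and> (\<forall>\<sigma> k. \<sigma> permutes {..<5::nat} \<longrightarrow> coeff5 D (k \<circ> \<sigma>) = coeff5 D k)
   \<and> D \<noteq> 0
   \<and> (\<forall>k. coeff5 D k \<noteq> 0 \<longrightarrow> (\<Sum>i<5. k i) = 32)
   \<and> irreducible (map5 (of_rat :: rat \<Rightarrow> complex) D)"
proof (intro exI[of _ Dpoly] conjI allI impI)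
  show "eval5 Dc (\<lambda>i. (s i)^2) = Delta_sqrt s" for s by (rule D_delta)
  show "irreducible Dc" by (rule irred_Dc)
  show "Dpoly \<noteq> 0" using Dc_nz by (auto simp: map5_def)
  have cm: "coeff5 Dc k = of_rat (coeff5 Dpoly k)" for k by (simp add: coeff5_map5)
  fix \<sigma> k
  show "coeff5 Dpoly (k \<circ> \<sigma>) = coeff5 Dpoly k" if s: "\<sigma> permutes {..<5::nat}"
  proof -
    have "coeff5 Dc (k \<circ> \<sigma>) = coeff5 Dc k"
      by (rule coeff_perm_general[OF s]) (rule evalD_perm[OF s])
    then show ?thesis by (simp add: cm)
  qed
next
  fix k
  assume nz: "coeff5 Dpoly k \<noteq> 0"
  have cm: "coeff5 Dc k = of_rat (coeff5 Dpoly k)" by (simp add: coeff5_map5)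
  show "(\<Sum>i<5. k i) = 32"
    by (rule coeff_hom_general[of Dc]) (simp_all add: D_hom cm nz)
qed

end
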